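(* There exist a transition matrix $P$, reward distributions, and probabilities $q^0_j$ of the causal variables $X^0_j$ ($j\in[n]$) at the start state such that, for any probabilities $q^i_j$ of the causal variables at the intermediate states $i\in[k]$, the simple regret achieved by any algorithm with budget $T$ satisfies $$\mathrm{Regret}_T\in\Omega\left(\sqrt{\frac{\lambda}{T}}\right).$$
   Context: Two-stage causal MDP. There is a start state $0$, intermediate states $[k]=\{1,\dots,k\}$ and a terminal state. At each state $i\in\{0,1,\dots,k\}$ there are $n$ mutually independent Bernoulli variables $X^i_1,\dots,X^i_n$ with $q^i_j=\mathbb{P}\{X^i_j=1\}$. The atomic interventions at state $i$ are $\mathcal{I}_i=\{do()\}\cup\{do(X^i_j=0),do(X^i_j=1): j\in[n]\}$, $N=2n+1$; $do()$ lets all variables take their natural values and $do(X^i_j=x)$ sets $X^i_j=x$ while other variables are drawn independently. Performing $a\in\mathcal{I}_0$ at state $0$ leads to state $i\in[k]$ with probability $P_{(a,i)}$ (depending stochastically on the realized $X^0$-values), $P\in\mathbb{R}^{N\times k}$. At state $i\in[k]$, after an intervention the learner observes all $X^i_j$ and a reward $R_i\in\{0,1\}$ whose law depends on the $X^i$-values; $\mathbb{E}[R_i\mid a]$ is the expected reward under $a\in\mathcal{I}_i$. A policy $\pi$ chooses $\pi(0)\in\mathcal{I}_0$, $\pi(i)\in\mathcal{I}_i$; its value is $V(\pi)=\sum_{i}P_{(\pi(0),i)}\mathbb{E}[R_i\mid\pi(i)]$, $\pi^*$ maximizes $V$, $\varepsilon(\pi)=V(\pi^* )-V(\pi)$. An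 algorithm with budget $T$ runs $T$ rounds (each: an intervention at state $0$, observe the $X^0$-values and the reached state $i$, an intervention at $i$, observe the $X^i$-values and $R_i$), all parameters being unknown to it, and outputs $\widehat\pi$; $\mathrm{Regret}_T=\mathbb{E}[\varepsilon(\widehat\pi)]$. Causal parameters: for state $i$, sort $q^i_{(1)}\le\dots\le q^i_{(n)}$ (taking, for each variable, the smaller of $\mathbb{P}\{X^i_j=1\}$ and $\mathbb{P}\{X^i_j=0\}$) and let $m_i=\max\{j:q^i_{(j)}<1/j\}$; $M=\mathrm{diag}(m_1,\dots,m_k)$. A frequency vector is $f\in\mathbb{R}^N$ with $f\ge0$, $\sum_a f_a=1$; $x^{\circ-1/2}$ denotes the entrywise map $x_i\mapsto x_i^{-1/2}$. The instance parameter is $\lambda=\min_f\|PM^{1/2}(P^\top f)^{\circ-1/2}\|_\infty^2$ over frequency vectors $f$. *)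

theory Defs
  imports "HOL-Probability.Probability"
begin

text \<open>Atomic interventions: Obs is do(), and Do j x is do(X_j = x).
  Variables are indexed by j in {1..n}; states by 0 (start) and i in {1..k}.\<close>
datatype interv = Obs | Do nat bool

definition interventions :: "nat \<Rightarrow> interv set" where
  "interventions n = {Obs} \<union> {Do j b | j b. j \<in> {1..n}}"

text \<open>Distribution of the vector (X_1,...,X_n) (coordinates outside {1..n} are False)
  at a state with probabilities q j = P(X_j = 1), under intervention a.\<close>
definition Xdist :: "nat \<Rightarrow> (nat \<Rightarrow> real) \<Rightarrow> interv \<Rightarrow> (nat \<Rightarrow> bool) pmf" where
  "Xdist n q a = Pi_pmf {1..n} False
     (\<lambda>j. case a of Obs \<Rightarrow> bernoulli_pmf (q j)
                  | Do j' b \<Rightarrow> (if j = j' then return_pmf b else bernoulli_pmf (q j)))"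

text \<open>Transition matrix: tr x is the law of the next state given the realised X^0 = x;
  P_(a,i) is the probability of reaching state i when performing a at state 0.\<close>
definition Pmat :: "nat \<Rightarrow> (nat \<Rightarrow> real) \<Rightarrow> ((nat \<Rightarrow> bool) \<Rightarrow> nat pmf) \<Rightarrow> interv \<Rightarrow> nat \<Rightarrow> real" where
  "Pmat n q0 tr a i = pmf (bind_pmf (Xdist n q0 a) tr) i"

text \<open>Reward R_i is {0,1}-valued with P(R_i = 1 | X^i = x) = rw i x.
  Expected reward E[R_i | a].\<close>
definition exp_reward :: "nat \<Rightarrow> (nat \<Rightarrow> nat \<Rightarrow> real) \<Rightarrow> (nat \<Rightarrow> (nat \<Rightarrow> bool) \<Rightarrow> real) \<Rightarrow> nat \<Rightarrow> interv \<Rightarrow> real" where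
  "exp_reward n qs rw i a = measure_pmf.expectation (Xdist n (qs i) a) (rw i)"

definition policies :: "nat \<Rightarrow> nat \<Rightarrow> (nat \<Rightarrow> interv) set" where
  "policies n k = {\<pi>. \<forall>i\<le>k. \<pi> i \<in> interventions n}"

definition pvalue :: "nat \<Rightarrow> nat \<Rightarrow> (nat \<Rightarrow> real) \<Rightarrow> ((nat \<Rightarrow> bool) \<Rightarrow> nat pmf)
    \<Rightarrow> (nat \<Rightarrow> nat \<Rightarrow> real) \<Rightarrow> (nat \<Rightarrow> (nat \<Rightarrow> bool) \<Rightarrow> real) \<Rightarrow> (nat \<Rightarrow> interv) \<Rightarrow> real" where
  "pvalue n k q0 tr qs rw \<pi> = (\<Sum>i\<in>{1..k}. Pmat n q0 tr (\<pi> 0) i * exp_reward n qs rw i (\<pi> i))"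

definition opt_value :: "nat \<Rightarrow> nat \<Rightarrow> (nat \<Rightarrow> real) \<Rightarrow> ((nat \<Rightarrow> bool) \<Rightarrow> nat pmf)
    \<Rightarrow> (nat \<Rightarrow> nat \<Rightarrow> real) \<Rightarrow> (nat \<Rightarrow> (nat \<Rightarrow> bool) \<Rightarrow> real) \<Rightarrow> real" where
  "opt_value n k q0 tr qs rw = (SUP \<pi>\<in>policies n k. pvalue n k q0 tr qs rw \<pi>)"

definition subopt :: "nat \<Rightarrow> nat \<Rightarrow> (nat \<Rightarrow> real) \<Rightarrow> ((nat \<Rightarrow> bool) \<Rightarrow> nat pmf)
    \<Rightarrow> (nat \<Rightarrow> nat \<Rightarrow> real) \<Rightarrow> (nat \<Rightarrow> (nat \<Rightarrow> bool) \<Rightarrow> real) \<Rightarrow> (nat \<Rightarrow> interv) \<Rightarrow> real" where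
  "subopt n k q0 tr qs rw \<pi> = opt_value n k q0 tr qs rw - pvalue n k q0 tr qs rw \<pi>"

text \<open>One round's observation: (intervention at 0, X^0-values, reached state i,
  intervention at i, X^i-values, reward R_i (True = 1)).\<close>
type_synonym obs = "interv \<times> (nat \<Rightarrow> bool) \<times> nat \<times> interv \<times> (nat \<Rightarrow> bool) \<times> bool"

text \<open>A (possibly randomised, adaptive) algorithm: the choice at state 0 given the history,
  the choice at the reached state given the history and the current round's observations,
  and the output policy given the full history.\<close>
record algo =
  alg_first :: "obs list \<Rightarrow> interv pmf"
  alg_second :: "obs list \<Rightarrow> interv \<Rightarrow> (nat \<Rightarrow> bool) \<Rightarrow> nat \<Rightarrow> interv pmf"
  alg_out :: "obs list \<Rightarrow> (nat \<Rightarrow> interv) pmf"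

definition valid_algo :: "nat \<Rightarrow> nat \<Rightarrow> algo \<Rightarrow> bool" where
  "valid_algo n k A \<longleftrightarrow>
     (\<forall>h. set_pmf (alg_first A h) \<subseteq> interventions n) \<and>
     (\<forall>h a x i. set_pmf (alg_second A h a x i) \<subseteq> interventions n) \<and>
     (\<forall>h. set_pmf (alg_out A h) \<subseteq> policies n k)"

definition round_pmf :: "nat \<Rightarrow> (nat \<Rightarrow> real) \<Rightarrow> ((nat \<Rightarrow> bool) \<Rightarrow> nat pmf)
    \<Rightarrow> (nat \<Rightarrow> nat \<Rightarrow> real) \<Rightarrow> (nat \<Rightarrow> (nat \<Rightarrow> bool) \<Rightarrow> real) \<Rightarrow> algo \<Rightarrow> obs list \<Rightarrow> obs pmf" where
  "round_pmf n q0 tr qs rw A h =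
     bind_pmf (alg_first A h) (\<lambda>a0.
     bind_pmf (Xdist n q0 a0) (\<lambda>x0.
     bind_pmf (tr x0) (\<lambda>i.
     bind_pmf (alg_second A h a0 x0 i) (\<lambda>a1.
     bind_pmf (Xdist n (qs i) a1) (\<lambda>x1.
     bind_pmf (bernoulli_pmf (rw i x1)) (\<lambda>r.
     return_pmf (a0, x0, i, a1, x1, r)))))))"

fun history :: "nat \<Rightarrow> (nat \<Rightarrow> real) \<Rightarrow> ((nat \<Rightarrow> bool) \<Rightarrow> nat pmf)
    \<Rightarrow> (nat \<Rightarrow> nat \<Rightarrow> real) \<Rightarrow> (nat \<Rightarrow> (nat \<Rightarrow> bool) \<Rightarrow> real) \<Rightarrow> algo \<Rightarrow> nat \<Rightarrow> obs list pmf" where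
  "history n q0 tr qs rw A 0 = return_pmf []"
| "history n q0 tr qs rw A (Suc t) =
     bind_pmf (history n q0 tr qs rw A t)
       (\<lambda>h. map_pmf (\<lambda>ob. h @ [ob]) (round_pmf n q0 tr qs rw A h))"

definition simple_regret :: "nat \<Rightarrow> nat \<Rightarrow> (nat \<Rightarrow> real) \<Rightarrow> ((nat \<Rightarrow> bool) \<Rightarrow> nat pmf)
    \<Rightarrow> (nat \<Rightarrow> nat \<Rightarrow> real) \<Rightarrow> (nat \<Rightarrow> (nat \<Rightarrow> bool) \<Rightarrow> real) \<Rightarrow> algo \<Rightarrow> nat \<Rightarrow> real" where
  "simple_regret n k q0 tr qs rw A T =
     measure_pmf.expectation (bind_pmf (history n q0 tr qs rw A T) (alg_out A))
       (subopt n k q0 tr qs rw)"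

definition mpar :: "nat \<Rightarrow> (nat \<Rightarrow> real) \<Rightarrow> nat" where
  "mpar n q = (let s = sort (map (\<lambda>j. min (q j) (1 - q j)) [1..<n+1])
               in Max {j \<in> {1..n}. s ! (j - 1) < 1 / real j})"

definition freqs :: "nat \<Rightarrow> (interv \<Rightarrow> real) set" where
  "freqs n = {f. (\<forall>a\<in>interventions n. f a > 0) \<and> (\<Sum>a\<in>interventions n. f a) = 1}"

text \<open>lambda = min_f || P M^(1/2) (P^T f)^(o -1/2) ||_inf ^2.\<close>
definition lambda_par :: "nat \<Rightarrow> nat \<Rightarrow> (nat \<Rightarrow> real) \<Rightarrow> ((nat \<Rightarrow> bool) \<Rightarrow> nat pmf)
    \<Rightarrow> (nat \<Rightarrow> nat \<Rightarrow> real) \<Rightarrow> real" where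
  "lambda_par n k q0 tr qs =
     (INF f\<in>freqs n.
        (Max ((\<lambda>a. \<bar>\<Sum>i\<in>{1..k}. Pmat n q0 tr a i * sqrt (real (mpar n (qs i)))
                     * (\<Sum>b\<in>interventions n. Pmat n q0 tr b i * f b) powr (-1/2)\<bar>)
              ` interventions n)) ^ 2)"

end

theory Submission
  imports Defs
begin


lemma integral_bind_pmf_bdd:
  fixes f :: "'b \<Rightarrow> real"
  assumes "\<And>x. \<bar>f x\<bar> \<le> B"
  shows "measure_pmf.expectation (bind_pmf M N) f = measure_pmf.expectation M (\<lambda>x. measure_pmf.expectation (N x) f)"
  using measurable_measure_pmf[of N] assms
  unfolding measure_pmf_bind
  apply (intro integral_bind[where K="count_space UNIV" and B=B and B'=1])
  apply (auto intro!: measure_pmf.finite_measure AE_I2 simp: measure_pmf.emeasure_space_1)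
  done

lemma integral_bind_pmf_fin:
  fixes h :: "'b \<Rightarrow> real"
  assumes "finite (set_pmf p)" "\<And>x. x \<in> set_pmf p \<Longrightarrow> finite (set_pmf (f x))"
  shows "measure_pmf.expectation (bind_pmf p f) h = measure_pmf.expectation p (\<lambda>a. measure_pmf.expectation (f a) h)"
  using assms
  by (simp add: pmf_expectation_bind[of "set_pmf p"] integral_measure_pmf[of "set_pmf p"])



definition tr1 :: "(nat \<Rightarrow> bool) \<Rightarrow> nat pmf" where "tr1 = (\<lambda>_. return_pmf 1)"

lemma fin_Xdist[simp]: "finite (set_pmf (Xdist n q a))"
  unfolding Xdist_def
  by (rule finite_subset[OF set_Pi_pmf_subset']) (auto intro!: finite_PiE_dflt)

lemma fin_bern[simp]: "finite (set_pmf (bernoulli_pmf p))"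
  by (rule finite_subset[of _ UNIV]) auto

lemma fin_interv[simp]: "finite (interventions n)"
proof -
  have "interventions n \<subseteq> insert Obs ((\<lambda>(j,b). Do j b) ` ({1..n} \<times> UNIV))"
    unfolding interventions_def by auto
  then show ?thesis by (rule finite_subset) auto
qed

lemma va_first[simp]: "valid_algo n k A \<Longrightarrow> finite (set_pmf (alg_first A h))"
  unfolding valid_algo_def by (meson fin_interv finite_subset)
lemma va_second[simp]: "valid_algo n k A \<Longrightarrow> finite (set_pmf (alg_second A h a x i))"
  unfolding valid_algo_def by (meson fin_interv finite_subset)

lemma fin_round[simp]: "valid_algo n k A \<Longrightarrow> finite (set_pmf (round_pmf n q0 tr1 qs rw A h))"
  unfolding round_pmf_def tr1_def by simp

lemma fin_hist[simp]: "valid_algo n k A \<Longrightarrow> finite (set_pmf (history n q0 tr1 qs rw A T))"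
  by (induction T) auto

lemma round_cong:
  fixes \<Phi>1 \<Phi>2 :: "obs \<Rightarrow> real"
  assumes "valid_algo n k A"
  and "\<And>a0 x0 a1 x1. measure_pmf.expectation (bernoulli_pmf (rw 1 x1)) (\<lambda>r. \<Phi>1 (a0,x0,1,a1,x1,r))
        = measure_pmf.expectation (bernoulli_pmf (rw' 1 x1)) (\<lambda>r. \<Phi>2 (a0,x0,1,a1,x1,r))"
  shows "measure_pmf.expectation (round_pmf n q0 tr1 qs rw A h) \<Phi>1
       = measure_pmf.expectation (round_pmf n q0 tr1 qs rw' A h) \<Phi>2"
  unfolding round_pmf_def tr1_def using assms
  by (simp add: integral_bind_pmf_fin del: integral_bernoulli_pmf)

lemma exp_le_const:
  fixes f :: "'a \<Rightarrow> real"
  assumes "finite (set_pmf M)" "\<And>x. x \<in> set_pmf M \<Longrightarrow> f x \<le> c"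
  shows "measure_pmf.expectation M f \<le> c"
  using assms by (intro measure_pmf.integral_le_const integrable_measure_pmf_finite)
     (auto simp: AE_measure_pmf_iff)

lemma exp_ge_const:
  fixes f :: "'a \<Rightarrow> real"
  assumes "finite (set_pmf M)" "\<And>x. x \<in> set_pmf M \<Longrightarrow> c \<le> f x"
  shows "c \<le> measure_pmf.expectation M f"
  using assms by (intro measure_pmf.integral_ge_const integrable_measure_pmf_finite)
     (auto simp: AE_measure_pmf_iff)

lemma round_le:
  fixes \<psi> :: "interv \<Rightarrow> (nat \<Rightarrow> bool) \<Rightarrow> real"
  assumes "valid_algo n k A"
  and "\<And>a. a \<in> interventions n \<Longrightarrow> measure_pmf.expectation (Xdist n (qs 1) a) (\<psi> a) \<le> c"
  shows "measure_pmf.expectation (round_pmf n q0 tr1 qs rw A h) (\<lambda>(a0,x0,i,a1,x1,r). \<psi> a1 x1) \<le> c"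
  unfolding round_pmf_def tr1_def using assms
  apply (simp add: integral_bind_pmf_fin del: integral_bernoulli_pmf)
  apply (rule exp_le_const, simp)
  apply (rule exp_le_const, simp)
  apply (rule exp_le_const, simp)
  using assms unfolding valid_algo_def by blast

lemma hist_step:
  fixes G :: "obs list \<Rightarrow> real"
  assumes "valid_algo n k A"
  shows "measure_pmf.expectation (history n q0 tr1 qs rw A (Suc T)) G =
    measure_pmf.expectation (history n q0 tr1 qs rw A T)
       (\<lambda>h. measure_pmf.expectation (round_pmf n q0 tr1 qs rw A h) (\<lambda>ob. G (h @ [ob])))"
  using assms by (simp add: integral_bind_pmf_fin)



lemma exp_add_const:
  fixes g :: "'a \<Rightarrow> real"
  assumes "finite (set_pmf M)"
  shows "measure_pmf.expectation M (\<lambda>x. c + g x) = c + measure_pmf.expectation M g"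
  using assms by (simp add: Bochner_Integration.integral_add integrable_measure_pmf_finite)

lemma round_step_sum:
  fixes g :: "obs \<Rightarrow> real"
  assumes "valid_algo n k A"
  shows "measure_pmf.expectation (round_pmf n q0 tr1 qs rw A h) (\<lambda>ob. sum_list (map g (h @ [ob])))
    = sum_list (map g h) + measure_pmf.expectation (round_pmf n q0 tr1 qs rw A h) g"
  using exp_add_const[OF fin_round[OF assms], where c="sum_list (map g h)" and g=g] by simp

lemma hist_sum_le:
  fixes g :: "obs \<Rightarrow> real"
  assumes "valid_algo n k A"
  and "\<And>h. measure_pmf.expectation (round_pmf n q0 tr1 qs rw A h) g \<le> c"
  shows "measure_pmf.expectation (history n q0 tr1 qs rw A T) (\<lambda>h. sum_list (map g h)) \<le> c * T"
proof (induction T)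
  case 0
  then show ?case by simp
next
  case (Suc T)
  have "measure_pmf.expectation (history n q0 tr1 qs rw A (Suc T)) (\<lambda>h. sum_list (map g h))
     = measure_pmf.expectation (history n q0 tr1 qs rw A T)
        (\<lambda>h. sum_list (map g h) + measure_pmf.expectation (round_pmf n q0 tr1 qs rw A h) g)"
    by (simp only: hist_step[OF assms(1)] round_step_sum[OF assms(1)])
  also have "\<dots> = measure_pmf.expectation (history n q0 tr1 qs rw A T) (\<lambda>h. sum_list (map g h))
      + measure_pmf.expectation (history n q0 tr1 qs rw A T) (\<lambda>h. measure_pmf.expectation (round_pmf n q0 tr1 qs rw A h) g)"
    using assms(1) by (simp add: Bochner_Integration.integral_add integrable_measure_pmf_finite)
  also have "\<dots> \<le> c * T + c"
    by (rule add_mono[OF Suc.IH exp_le_const]) (use assms in auto)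
  finally show ?case by (simp add: algebra_simps)
qed

lemma hist_sum_eq:
  fixes g1 g2 :: "obs \<Rightarrow> real"
  assumes "valid_algo n k A"
  and "\<And>h. measure_pmf.expectation (round_pmf n q0 tr1 qs rw A h) g1 = measure_pmf.expectation (round_pmf n q0 tr1 qs rw A h) g2"
  shows "measure_pmf.expectation (history n q0 tr1 qs rw A T) (\<lambda>h. sum_list (map g1 h))
       = measure_pmf.expectation (history n q0 tr1 qs rw A T) (\<lambda>h. sum_list (map g2 h))"
proof (induction T)
  case 0
  then show ?case by simp
next
  case (Suc T)
  have "measure_pmf.expectation (history n q0 tr1 qs rw A (Suc T)) (\<lambda>h. sum_list (map g1 h))
     = measure_pmf.expectation (history n q0 tr1 qs rw A T) (\<lambda>h. sum_list (map g1 h))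
      + measure_pmf.expectation (history n q0 tr1 qs rw A T) (\<lambda>h. measure_pmf.expectation (round_pmf n q0 tr1 qs rw A h) g1)"
    using assms(1) by (simp only: hist_step[OF assms(1)] round_step_sum[OF assms(1)])
       (simp add: Bochner_Integration.integral_add integrable_measure_pmf_finite)
  also have "\<dots> = measure_pmf.expectation (history n q0 tr1 qs rw A T) (\<lambda>h. sum_list (map g2 h))
      + measure_pmf.expectation (history n q0 tr1 qs rw A T) (\<lambda>h. measure_pmf.expectation (round_pmf n q0 tr1 qs rw A h) g2)"
    using Suc assms(2) by simp
  also have "\<dots> = measure_pmf.expectation (history n q0 tr1 qs rw A (Suc T)) (\<lambda>h. sum_list (map g2 h))"
    using assms(1) by (simp only: hist_step[OF assms(1)] round_step_sum[OF assms(1)])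
       (simp add: Bochner_Integration.integral_add integrable_measure_pmf_finite)
  finally show ?case .
qed

definition Lsum :: "((nat \<Rightarrow> bool) \<Rightarrow> bool \<Rightarrow> real) \<Rightarrow> obs list \<Rightarrow> real" where
  "Lsum F h = sum_list (map (\<lambda>(a0,x0,i,a1,x1,r). F x1 r) h)"

lemma hist_change:
  fixes G :: "obs list \<Rightarrow> real"
  assumes va: "valid_algo n k A"
  and r1: "\<And>x. 0 \<le> rw 1 x \<and> rw 1 x \<le> 1" and r2: "\<And>x. 0 \<le> rw' 1 x \<and> rw' 1 x \<le> 1"
  and c1: "\<And>x. rw' 1 x = rw 1 x * exp (F x True)"
  and c2: "\<And>x. 1 - rw' 1 x = (1 - rw 1 x) * exp (F x False)"
  shows "measure_pmf.expectation (history n q0 tr1 qs rw' A T) G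
       = measure_pmf.expectation (history n q0 tr1 qs rw A T) (\<lambda>h. G h * exp (Lsum F h))"
proof (induction T arbitrary: G)
  case 0
  then show ?case by (simp add: Lsum_def)
next
  case (Suc T)
  have rnd: "measure_pmf.expectation (round_pmf n q0 tr1 qs rw' A h) \<Phi>
    = measure_pmf.expectation (round_pmf n q0 tr1 qs rw A h) (\<lambda>ob. \<Phi> ob * exp ((\<lambda>(a0,x0,i,a1,x1,r). F x1 r) ob))"
    for h and \<Phi> :: "obs \<Rightarrow> real"
  proof (rule round_cong[OF va])
    fix a0 x0 a1 x1
    show "measure_pmf.expectation (bernoulli_pmf (rw' 1 x1)) (\<lambda>r. \<Phi> (a0, x0, 1, a1, x1, r)) =
         measure_pmf.expectation (bernoulli_pmf (rw 1 x1))
          (\<lambda>r. \<Phi> (a0, x0, 1, a1, x1, r) * exp ((\<lambda>(a0,x0,i,a1,x1,r). F x1 r) (a0, x0, 1, a1, x1, r)))"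
    proof -
      let ?T = "\<Phi> (a0, x0, 1, a1, x1, True)" and ?F = "\<Phi> (a0, x0, 1, a1, x1, False)"
      have e1: "?T * rw' 1 x1 = ?T * exp (F x1 True) * rw 1 x1" using c1[of x1] by simp
      have e2: "?F * (1 - rw' 1 x1) = ?F * exp (F x1 False) * (1 - rw 1 x1)" using c2[of x1] by simp
      have L: "measure_pmf.expectation (bernoulli_pmf (rw' 1 x1)) (\<lambda>r. \<Phi> (a0, x0, 1, a1, x1, r))
          = ?T * rw' 1 x1 + ?F * (1 - rw' 1 x1)"
        using r2[of x1] by (intro integral_bernoulli_pmf) auto
      have R: "measure_pmf.expectation (bernoulli_pmf (rw 1 x1))
          (\<lambda>r. \<Phi> (a0, x0, 1, a1, x1, r) * exp ((\<lambda>(a0,x0,i,a1,x1,r). F x1 r) (a0, x0, 1, a1, x1, r)))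
          = ?T * exp (F x1 True) * rw 1 x1 + ?F * exp (F x1 False) * (1 - rw 1 x1)"
        using r1[of x1] by (intro integral_bernoulli_pmf[THEN trans]) auto
      show ?thesis unfolding L R using e1 e2 by linarith
    qed
  qed
  have "measure_pmf.expectation (history n q0 tr1 qs rw' A (Suc T)) G
    = measure_pmf.expectation (history n q0 tr1 qs rw' A T)
       (\<lambda>h. measure_pmf.expectation (round_pmf n q0 tr1 qs rw' A h) (\<lambda>ob. G (h @ [ob])))"
    by (rule hist_step[OF va])
  also have "\<dots> = measure_pmf.expectation (history n q0 tr1 qs rw A T)
       (\<lambda>h. measure_pmf.expectation (round_pmf n q0 tr1 qs rw' A h) (\<lambda>ob. G (h @ [ob])) * exp (Lsum F h))"
    by (rule Suc)
  also have "\<dots> = measure_pmf.expectation (history n q0 tr1 qs rw A T)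
       (\<lambda>h. measure_pmf.expectation (round_pmf n q0 tr1 qs rw A h) (\<lambda>ob. G (h @ [ob]) * exp (Lsum F (h @ [ob]))))"
  proof (rule Bochner_Integration.integral_cong[OF refl])
    fix h
    have "measure_pmf.expectation (round_pmf n q0 tr1 qs rw' A h) (\<lambda>ob. G (h @ [ob])) * exp (Lsum F h)
      = measure_pmf.expectation (round_pmf n q0 tr1 qs rw A h) (\<lambda>ob. G (h @ [ob]) * exp ((\<lambda>(a0,x0,i,a1,x1,r). F x1 r) ob)) * exp (Lsum F h)"
      by (simp only: rnd)
    also have "\<dots> = measure_pmf.expectation (round_pmf n q0 tr1 qs rw A h) (\<lambda>ob. G (h @ [ob]) * exp ((\<lambda>(a0,x0,i,a1,x1,r). F x1 r) ob) * exp (Lsum F h))"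
      by simp
    also have "\<dots> = measure_pmf.expectation (round_pmf n q0 tr1 qs rw A h) (\<lambda>ob. G (h @ [ob]) * exp (Lsum F (h @ [ob])))"
      by (rule Bochner_Integration.integral_cong) (auto simp: Lsum_def exp_add split: prod.splits)
    finally show "measure_pmf.expectation (round_pmf n q0 tr1 qs rw' A h) (\<lambda>ob. G (h @ [ob])) * exp (Lsum F h)
      = measure_pmf.expectation (round_pmf n q0 tr1 qs rw A h) (\<lambda>ob. G (h @ [ob]) * exp (Lsum F (h @ [ob])))" .
  qed
  also have "\<dots> = measure_pmf.expectation (history n q0 tr1 qs rw A (Suc T)) (\<lambda>h. G h * exp (Lsum F h))"
    by (rule hist_step[OF va, symmetric])
  finally show ?case .
qed



lemma bh_point:
  fixes g l t :: real
  assumes "0 \<le> g" "g \<le> 1" "t > 0"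
  shows "exp (l/2) \<le> (t * (g + (1 - g) * exp l) + (1 + exp l) / t) / 2"
proof -
  define y where "y = exp (l/2)"
  have y0: "y > 0" unfolding y_def by simp
  have yy: "exp l = y^2" unfolding y_def by (simp add: power2_eq_square exp_add[symmetric])
  define w where "w = g + (1 - g) * y^2"
  have w0: "w \<ge> 0" unfolding w_def using assms by simp
  have wv: "w * (1 + y^2) \<ge> y^2"
  proof (cases "y \<le> 1")
    case True
    have "y^2 \<le> 1" using True y0 by (simp add: power_le_one)
    hence "g * y^2 \<le> g" using assms by (simp add: mult_left_le)
    hence "w \<ge> y^2" unfolding w_def by (simp add: algebra_simps)
    moreover have "w \<le> w * (1 + y^2)" using w0 by (simp add: algebra_simps)
    ultimately show ?thesis by linarith
  next
    case False
    have "y^2 \<ge> 1" using False by (simp add: one_le_power)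
    hence "(1 - g) * (y^2 - 1) \<ge> 0" using assms by (intro mult_nonneg_nonneg) auto
    moreover have "w = 1 + (1 - g) * (y^2 - 1)" unfolding w_def by (simp add: algebra_simps)
    ultimately have w1: "w \<ge> 1" by linarith
    have "1 * (1 + y^2) \<le> w * (1 + y^2)" using w1 by (intro mult_right_mono) auto
    then show ?thesis by simp
  qed
  have s: "(t * w + (1 + y^2) / t)^2 \<ge> 4 * (w * (1 + y^2))"
  proof -
    have "(t * w + (1 + y^2) / t)^2 - 4 * (w * (1 + y^2)) = (t * w - (1 + y^2) / t)^2"
      using assms(3) by (simp add: power2_eq_square field_simps)
    then show ?thesis using zero_le_power2[of "t * w - (1 + y^2) / t"] by linarith
  qed
  have pos: "t * w + (1 + y^2) / t \<ge> 0" using w0 assms(3) by simp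
  have "(2*y)^2 \<le> (t * w + (1 + y^2) / t)^2" using s wv by (simp add: power_mult_distrib)
  hence "2*y \<le> t * w + (1 + y^2) / t" using pos y0 by (meson power2_le_imp_le)
  then show ?thesis unfolding w_def y_def[symmetric] yy by simp
qed

lemma bh:
  fixes M :: "'a pmf" and g l :: "'a \<Rightarrow> real"
  assumes fin: "finite (set_pmf M)" and g: "\<And>x. 0 \<le> g x \<and> g x \<le> 1"
  and e1: "measure_pmf.expectation M (\<lambda>x. exp (l x)) = 1"
  shows "measure_pmf.expectation M g + measure_pmf.expectation M (\<lambda>x. (1 - g x) * exp (l x))
      \<ge> (1 + measure_pmf.expectation M l) / 2"
proof -
  note int = integrable_measure_pmf_finite[OF fin]
  define Ew where "Ew = measure_pmf.expectation M g + measure_pmf.expectation M (\<lambda>x. (1 - g x) * exp (l x))"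
  define El where "El = measure_pmf.expectation M l"
  have Ew_ge0: "Ew \<ge> 0" unfolding Ew_def using g
    by (intro add_nonneg_nonneg Bochner_Integration.integral_nonneg) auto
  define B where "B = 1 + El / 2"
  have EyB: "measure_pmf.expectation M (\<lambda>x. exp (l x / 2)) \<ge> B"
  proof -
    have "measure_pmf.expectation M (\<lambda>x. 1 + l x / 2) \<le> measure_pmf.expectation M (\<lambda>x. exp (l x / 2))"
      by (intro integral_mono int) (simp add: add.commute exp_ge_add_one_self)
    moreover have "measure_pmf.expectation M (\<lambda>x. 1 + l x / 2) = B"
      unfolding B_def El_def using fin by (simp add: Bochner_Integration.integral_add int)
    ultimately show ?thesis by simp
  qed
  have Ey_le: "measure_pmf.expectation M (\<lambda>x. exp (l x / 2)) \<le> (t * Ew + 2 / t) / 2" if t: "t > 0" for t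
  proof -
    have "measure_pmf.expectation M (\<lambda>x. exp (l x / 2))
        \<le> measure_pmf.expectation M (\<lambda>x. (t * (g x + (1 - g x) * exp (l x)) + (1 + exp (l x)) / t) / 2)"
      using g t by (intro integral_mono int bh_point) auto
    also have "\<dots> = (t * Ew + 2 / t) / 2"
    proof -
      have a: "measure_pmf.expectation M (\<lambda>x. g x + (1 - g x) * exp (l x)) = Ew"
        unfolding Ew_def by (rule Bochner_Integration.integral_add[OF int int])
      have b: "measure_pmf.expectation M (\<lambda>x. 1 + exp (l x)) = 2"
        using e1 by (subst Bochner_Integration.integral_add[OF int int]) simp
      have "measure_pmf.expectation M (\<lambda>x. (t * (g x + (1 - g x) * exp (l x)) + (1 + exp (l x)) / t) / 2)
         = (t * measure_pmf.expectation M (\<lambda>x. g x + (1 - g x) * exp (l x))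
             + measure_pmf.expectation M (\<lambda>x. 1 + exp (l x)) / t) / 2"
        by (simp add: Bochner_Integration.integral_add[OF int int])
      then show ?thesis unfolding a b .
    qed
    finally show ?thesis .
  qed
  show ?thesis
  proof (cases "B \<le> 0")
    case True
    then have "(1 + El) / 2 \<le> 0" unfolding B_def by simp
    then show ?thesis using Ew_ge0 unfolding Ew_def El_def by linarith
  next
    case False
    have Bp: "B > 0" using False by simp
    have "B \<le> ((2/B) * Ew + 2 / (2/B)) / 2" using EyB Ey_le[of "2/B"] Bp by simp
    also have "\<dots> = Ew / B + B / 2" using Bp by simp
    finally have "B \<le> Ew / B + B / 2" .
    hence "B * B \<le> (Ew / B + B / 2) * B" using Bp by (simp add: mult_right_mono)
    also have "\<dots> = Ew + B * B / 2" using Bp by (simp add: algebra_simps)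
    finally have "B * B \<le> 2 * Ew" by simp
    moreover have "B * B \<ge> 1 + El"
    proof -
      have "B * B = 1 + El + (El/2)^2" unfolding B_def by (simp add: power2_eq_square algebra_simps)
      then show ?thesis using zero_le_power2[of "El/2"] by linarith
    qed
    ultimately have "1 + El \<le> 2 * Ew" by linarith
    then show ?thesis unfolding Ew_def El_def by simp
  qed
qed



definition rare :: "(nat \<Rightarrow> real) \<Rightarrow> nat \<Rightarrow> bool" where "rare q j = (q j \<le> 1/2)"
definition rho :: "(nat \<Rightarrow> real) \<Rightarrow> nat \<Rightarrow> real" where "rho q j = min (q j) (1 - q j)"
definition ind :: "bool \<Rightarrow> real" where "ind b = (if b then 1 else 0)"

lemma Xdist_comp:
  assumes "j \<in> {1..n}"
  shows "map_pmf (\<lambda>x. x j) (Xdist n q a) =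
    (case a of Obs \<Rightarrow> bernoulli_pmf (q j) | Do j' b \<Rightarrow> (if j = j' then return_pmf b else bernoulli_pmf (q j)))"
  unfolding Xdist_def using assms by (subst Pi_pmf_component) auto

lemma exp_comp:
  fixes \<phi> :: "bool \<Rightarrow> real"
  assumes "j \<in> {1..n}"
  shows "measure_pmf.expectation (Xdist n q a) (\<lambda>x. \<phi> (x j)) =
     measure_pmf.expectation (case a of Obs \<Rightarrow> bernoulli_pmf (q j) | Do j' b \<Rightarrow> (if j = j' then return_pmf b else bernoulli_pmf (q j))) \<phi>"
proof -
  have "measure_pmf.expectation (Xdist n q a) (\<lambda>x. \<phi> (x j)) = measure_pmf.expectation (map_pmf (\<lambda>x. x j) (Xdist n q a)) \<phi>"
    by simp
  then show ?thesis unfolding Xdist_comp[OF assms] .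
qed

lemma Xdist_forced:
  assumes "j \<in> {1..n}" "x \<in> set_pmf (Xdist n q (Do j b))"
  shows "x j = b"
proof -
  have "x j \<in> set_pmf (map_pmf (\<lambda>x. x j) (Xdist n q (Do j b)))" using assms(2) by simp
  then show ?thesis unfolding Xdist_comp[OF assms(1)] by simp
qed

lemma prob_rare:
  assumes "j \<in> {1..n}" "0 \<le> q j" "q j \<le> 1"
  shows "measure_pmf.expectation (Xdist n q a) (\<lambda>x. ind (x j = rare q j)) =
    (case a of Do j' b \<Rightarrow> (if j = j' then ind (b = rare q j) else rho q j) | Obs \<Rightarrow> rho q j)"
  using assms
  by (subst exp_comp[OF assms(1), where \<phi>="\<lambda>b. ind (b = rare q j)"])
     (auto simp: ind_def rare_def rho_def split: interv.splits)

lemma rho_le: "rho q j \<le> 1/2" unfolding rho_def by (auto simp: min_def)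

lemma prob_rare_le:
  assumes "j \<in> {1..n}" "0 \<le> q j" "q j \<le> 1"
  shows "measure_pmf.expectation (Xdist n q a) (\<lambda>x. ind (x j = rare q j)) \<le> rho q j + ind (a = Do j (rare q j))"
  unfolding prob_rare[where j=j and n=n and q=q and a=a, OF assms] using rho_le[of q j] assms
  by (auto simp: ind_def rho_def split: interv.splits)

lemma prob_rare_le2:
  assumes "j \<in> {1..n}" "0 \<le> q j" "q j \<le> 1" "a \<noteq> Do j (rare q j)"
  shows "measure_pmf.expectation (Xdist n q a) (\<lambda>x. ind (x j = rare q j)) \<le> 1/2"
  using prob_rare_le[where j=j and n=n and q=q and a=a, OF assms(1-3)] rho_le[of q j] assms(4) by (simp add: ind_def)

lemma sum_ind_Do_le:
  assumes "finite S"
  shows "(\<Sum>j\<in>S. ind (a = Do j (f j))) \<le> 1"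
proof (cases "\<exists>j\<in>S. a = Do j (f j)")
  case True
  then obtain j where j: "j \<in> S" "a = Do j (f j)" by blast
  have "(\<Sum>i\<in>S. ind (a = Do i (f i))) = (\<Sum>i\<in>S. if i = j then 1 else 0)"
    using j by (intro sum.cong) (auto simp: ind_def)
  also have "\<dots> = 1" using j assms by simp
  finally show ?thesis by simp
next
  case False
  then show ?thesis by (simp add: ind_def)
qed



definition rw0 :: "(nat \<Rightarrow> real) \<Rightarrow> nat set \<Rightarrow> real \<Rightarrow> nat \<Rightarrow> (nat \<Rightarrow> bool) \<Rightarrow> real" where
  "rw0 q S \<delta> = (\<lambda>i x. if \<exists>j\<in>S. x j = rare q j then 1/2 - \<delta> else 1/2)"
definition rwj :: "(nat \<Rightarrow> real) \<Rightarrow> nat set \<Rightarrow> real \<Rightarrow> nat \<Rightarrow> nat \<Rightarrow> (nat \<Rightarrow> bool) \<Rightarrow> real" where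
  "rwj q S \<delta> j = (\<lambda>i x. if x j = rare q j then 1/2 + \<delta> else rw0 q S \<delta> i x)"
definition Lc :: "real \<Rightarrow> real" where "Lc \<delta> = ln ((1/2 + \<delta>) / (1/2 - \<delta>))"
definition Fj :: "(nat \<Rightarrow> real) \<Rightarrow> real \<Rightarrow> nat \<Rightarrow> (nat \<Rightarrow> bool) \<Rightarrow> bool \<Rightarrow> real" where
  "Fj q \<delta> j = (\<lambda>x r. if x j = rare q j then (if r then Lc \<delta> else - Lc \<delta>) else 0)"

locale inst =
  fixes n :: nat and q :: "nat \<Rightarrow> real" and S :: "nat set" and \<delta> :: real
  assumes dpos: "0 < \<delta>" and dsmall: "\<delta> \<le> 1/4"
  and S: "S \<subseteq> {1..n}" and qb: "\<And>j. j \<in> {1..n} \<Longrightarrow> 0 \<le> q j \<and> q j \<le> 1"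
  and rhoS: "(\<Sum>j\<in>S. rho q j) \<le> 1/2"
begin

lemma finS: "finite S" using S finite_subset by blast

lemma rw0_bnd: "0 \<le> rw0 q S \<delta> i x \<and> rw0 q S \<delta> i x \<le> 1"
  using dpos dsmall by (auto simp: rw0_def)
lemma rwj_bnd: "0 \<le> rwj q S \<delta> j i x \<and> rwj q S \<delta> j i x \<le> 1"
  using dpos dsmall rw0_bnd by (auto simp: rwj_def)

lemma Lc_nonneg: "Lc \<delta> \<ge> 0"
  unfolding Lc_def using dpos dsmall by (simp add: field_simps)

lemma Lc_le: "Lc \<delta> \<le> 8 * \<delta>"
proof -
  have "Lc \<delta> \<le> (1/2 + \<delta>) / (1/2 - \<delta>) - 1"
    unfolding Lc_def using dpos dsmall by (intro ln_le_minus_one) (simp add: field_simps)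
  also have "\<dots> = 2 * \<delta> / (1/2 - \<delta>)" using dsmall by (simp add: field_simps)
  also have "\<dots> \<le> 8 * \<delta>" using dpos dsmall by (simp add: field_simps)
  finally show ?thesis .
qed

lemma change1: "j \<in> S \<Longrightarrow> rwj q S \<delta> j 1 x = rw0 q S \<delta> 1 x * exp (Fj q \<delta> j x True)"
  using dpos dsmall by (auto simp: rwj_def rw0_def Fj_def Lc_def)

lemma change2: "j \<in> S \<Longrightarrow> 1 - rwj q S \<delta> j 1 x = (1 - rw0 q S \<delta> 1 x) * exp (Fj q \<delta> j x False)"
  using dpos dsmall by (auto simp: rwj_def rw0_def Fj_def Lc_def exp_minus field_simps)

lemma mu0_F: 
  assumes "j \<in> S"
  shows "measure_pmf.expectation (Xdist n q (Do j (rare q j))) (rw0 q S \<delta> 1) = 1/2 - \<delta>"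
proof -
  have "measure_pmf.expectation (Xdist n q (Do j (rare q j))) (rw0 q S \<delta> 1)
     = measure_pmf.expectation (Xdist n q (Do j (rare q j))) (\<lambda>_. 1/2 - \<delta>)"
  proof (intro integral_cong_AE)
    have "rw0 q S \<delta> 1 x = 1/2 - \<delta>" if "x \<in> set_pmf (Xdist n q (Do j (rare q j)))" for x
    proof -
      have "x j = rare q j" using Xdist_forced[of j n x q "rare q j"] that assms S by blast
      then show ?thesis using assms unfolding rw0_def by auto
    qed
    then show "AE x in measure_pmf (Xdist n q (Do j (rare q j))). rw0 q S \<delta> 1 x = 1/2 - \<delta>"
      by (simp add: AE_measure_pmf_iff)
  qed auto
  then show ?thesis by simp
qed

lemma muj_F:
  assumes "j \<in> S"
  shows "measure_pmf.expectation (Xdist n q (Do j (rare q j))) (rwj q S \<delta> j 1) = 1/2 + \<delta>"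
proof -
  have "measure_pmf.expectation (Xdist n q (Do j (rare q j))) (rwj q S \<delta> j 1)
     = measure_pmf.expectation (Xdist n q (Do j (rare q j))) (\<lambda>_. 1/2 + \<delta>)"
  proof (intro integral_cong_AE)
    have "rwj q S \<delta> j 1 x = 1/2 + \<delta>" if "x \<in> set_pmf (Xdist n q (Do j (rare q j)))" for x
    proof -
      have "x j = rare q j" using Xdist_forced[of j n x q "rare q j"] that assms S by blast
      then show ?thesis unfolding rwj_def by auto
    qed
    then show "AE x in measure_pmf (Xdist n q (Do j (rare q j))). rwj q S \<delta> j 1 x = 1/2 + \<delta>"
      by (simp add: AE_measure_pmf_iff)
  qed auto
  then show ?thesis by simp
qed

lemma exp_sum_ind:
  "measure_pmf.expectation (Xdist n q a) (\<lambda>x. \<Sum>j\<in>S. ind (x j = rare q j))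
   = (\<Sum>j\<in>S. measure_pmf.expectation (Xdist n q a) (\<lambda>x. ind (x j = rare q j)))"
  by (rule Bochner_Integration.integral_sum) (simp add: integrable_measure_pmf_finite)

lemma mu0_Obs: "measure_pmf.expectation (Xdist n q Obs) (rw0 q S \<delta> 1) \<ge> 1/2 - \<delta>/2"
proof -
  have pt: "rw0 q S \<delta> 1 x \<ge> 1/2 - \<delta> * (\<Sum>j\<in>S. ind (x j = rare q j))" for x
  proof (cases "\<exists>j\<in>S. x j = rare q j")
    case True
    then obtain j where j: "j \<in> S" "x j = rare q j" by blast
    have "1 \<le> (\<Sum>i\<in>S. ind (x i = rare q i))"
      using sum_nonneg_leq_bound[of S "\<lambda>i. ind (x i = rare q i)" "(\<Sum>i\<in>S. ind (x i = rare q i))" j] j finS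
      by (auto simp: ind_def)
    then show ?thesis using True dpos by (simp add: rw0_def)
  next
    case False
    then have "(\<Sum>i\<in>S. ind (x i = rare q i)) = 0" by (auto simp: ind_def intro: sum.neutral)
    then show ?thesis using False by (simp add: rw0_def ind_def)
  qed
  have "measure_pmf.expectation (Xdist n q Obs) (\<lambda>x. 1/2 - \<delta> * (\<Sum>j\<in>S. ind (x j = rare q j)))
     = 1/2 - \<delta> * (\<Sum>j\<in>S. measure_pmf.expectation (Xdist n q Obs) (\<lambda>x. ind (x j = rare q j)))"
    by (simp add: Bochner_Integration.integral_diff integrable_measure_pmf_finite exp_sum_ind)
  also have "(\<Sum>j\<in>S. measure_pmf.expectation (Xdist n q Obs) (\<lambda>x. ind (x j = rare q j))) = (\<Sum>j\<in>S. rho q j)"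
    using S qb by (intro sum.cong refl) (subst prob_rare, auto)
  finally have eq: "measure_pmf.expectation (Xdist n q Obs) (\<lambda>x. 1/2 - \<delta> * (\<Sum>j\<in>S. ind (x j = rare q j))) = 1/2 - \<delta> * (\<Sum>j\<in>S. rho q j)" .
  have "\<delta> * (\<Sum>j\<in>S. rho q j) \<le> \<delta> * (1/2)" using rhoS dpos by (intro mult_left_mono) auto
  then have "measure_pmf.expectation (Xdist n q Obs) (\<lambda>x. 1/2 - \<delta> * (\<Sum>j\<in>S. ind (x j = rare q j))) \<ge> 1/2 - \<delta>/2"
    unfolding eq by linarith
  moreover have "measure_pmf.expectation (Xdist n q Obs) (\<lambda>x. 1/2 - \<delta> * (\<Sum>j\<in>S. ind (x j = rare q j)))
      \<le> measure_pmf.expectation (Xdist n q Obs) (rw0 q S \<delta> 1)"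
    using pt by (intro integral_mono integrable_measure_pmf_finite) auto
  ultimately show ?thesis by linarith
qed

lemma muj_other:
  assumes "j \<in> S" "a \<noteq> Do j (rare q j)"
  shows "measure_pmf.expectation (Xdist n q a) (rwj q S \<delta> j 1) \<le> 1/2 + \<delta>/2"
proof -
  have pt: "rwj q S \<delta> j 1 x \<le> 1/2 + \<delta> * ind (x j = rare q j)" for x
    using dpos by (auto simp: rwj_def rw0_def ind_def)
  have "measure_pmf.expectation (Xdist n q a) (rwj q S \<delta> j 1)
     \<le> measure_pmf.expectation (Xdist n q a) (\<lambda>x. 1/2 + \<delta> * ind (x j = rare q j))"
    using pt by (intro integral_mono integrable_measure_pmf_finite) auto
  also have "\<dots> = 1/2 + \<delta> * measure_pmf.expectation (Xdist n q a) (\<lambda>x. ind (x j = rare q j))"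
    by (simp add: Bochner_Integration.integral_add integrable_measure_pmf_finite)
  also have "\<dots> \<le> 1/2 + \<delta> * (1/2)"
    using prob_rare_le2[of j n q a] assms S qb[of j] dpos by (intro add_left_mono mult_left_mono) auto
  finally show ?thesis by simp
qed

lemma round_K:
  assumes va: "valid_algo n k A" and qs1: "qs 1 = q"
  shows "measure_pmf.expectation (round_pmf n q0 tr1 qs (rw0 q S \<delta>) A h)
           (\<lambda>(a0,x0,i,a1,x1,r). \<Sum>j\<in>S. - Fj q \<delta> j x1 r) \<le> 3 * \<delta> * Lc \<delta>"
proof -
  have "measure_pmf.expectation (round_pmf n q0 tr1 qs (rw0 q S \<delta>) A h)
           (\<lambda>(a0,x0,i,a1,x1,r). \<Sum>j\<in>S. - Fj q \<delta> j x1 r)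
      = measure_pmf.expectation (round_pmf n q0 tr1 qs (rw0 q S \<delta>) A h)
           (\<lambda>(a0,x0,i,a1,x1,r). 2 * \<delta> * Lc \<delta> * (\<Sum>j\<in>S. ind (x1 j = rare q j)))"
  proof (rule round_cong[OF va])
    fix a0 x0 a1 x1
    show "measure_pmf.expectation (bernoulli_pmf (rw0 q S \<delta> 1 x1))
        (\<lambda>r. (\<lambda>(a0,x0,i,a1,x1,r). \<Sum>j\<in>S. - Fj q \<delta> j x1 r) (a0, x0, 1, a1, x1, r)) =
       measure_pmf.expectation (bernoulli_pmf (rw0 q S \<delta> 1 x1))
        (\<lambda>r. (\<lambda>(a0,x0,i,a1,x1,r). 2 * \<delta> * Lc \<delta> * (\<Sum>j\<in>S. ind (x1 j = rare q j))) (a0, x0, 1, a1, x1, r))"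
    proof (cases "\<exists>j\<in>S. x1 j = rare q j")
      case True
      have e: "(\<Sum>j\<in>S. - Fj q \<delta> j x1 b) = (if b then - Lc \<delta> else Lc \<delta>) * (\<Sum>j\<in>S. ind (x1 j = rare q j))" for b
        unfolding sum_distrib_left by (intro sum.cong refl) (auto simp: Fj_def ind_def)
      have eT: "(\<Sum>j\<in>S. - Fj q \<delta> j x1 True) = - Lc \<delta> * (\<Sum>j\<in>S. ind (x1 j = rare q j))" using e[of True] by simp
      have eF: "(\<Sum>j\<in>S. - Fj q \<delta> j x1 False) = Lc \<delta> * (\<Sum>j\<in>S. ind (x1 j = rare q j))" using e[of False] by simp
      have r: "rw0 q S \<delta> 1 x1 = 1/2 - \<delta>" using True by (simp add: rw0_def)
      have p0: "0 \<le> rw0 q S \<delta> 1 x1" and p1: "rw0 q S \<delta> 1 x1 \<le> 1" using rw0_bnd[of 1 x1] by auto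
      show ?thesis
        apply (simp only: prod.case)
        apply (subst integral_bernoulli_pmf[OF p0 p1])
        apply (simp only: eT eF r)
        apply (simp add: algebra_simps)
        done
    next
      case False
      have e: "(\<Sum>j\<in>S. - Fj q \<delta> j x1 b) = 0" for b using False by (simp add: Fj_def)
      have e2: "(\<Sum>j\<in>S. ind (x1 j = rare q j)) = 0" using False by (simp add: ind_def)
      show ?thesis by (simp add: e e2)
    qed
  qed
  also have "\<dots> \<le> 3 * \<delta> * Lc \<delta>"
  proof -
   have bnd: "measure_pmf.expectation (Xdist n (qs 1) a) (\<lambda>x1. 2 * \<delta> * Lc \<delta> * (\<Sum>j\<in>S. ind (x1 j = rare q j))) \<le> 3 * \<delta> * Lc \<delta>"
     if a: "a \<in> interventions n" for a
   proof -
    have "measure_pmf.expectation (Xdist n q a) (\<lambda>x1. 2 * \<delta> * Lc \<delta> * (\<Sum>j\<in>S. ind (x1 j = rare q j)))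
       = 2 * \<delta> * Lc \<delta> * (\<Sum>j\<in>S. measure_pmf.expectation (Xdist n q a) (\<lambda>x. ind (x j = rare q j)))"
      by (simp add: exp_sum_ind)
    also have "\<dots> \<le> 2 * \<delta> * Lc \<delta> * (\<Sum>j\<in>S. rho q j + ind (a = Do j (rare q j)))"
      using dpos Lc_nonneg S qb
      by (intro mult_left_mono sum_mono prob_rare_le) auto
    also have "\<dots> \<le> 2 * \<delta> * Lc \<delta> * (3/2)"
      using dpos Lc_nonneg rhoS sum_ind_Do_le[OF finS, of a "rare q"]
      by (intro mult_left_mono) (auto simp: sum.distrib)
    finally show ?thesis unfolding qs1 by simp
   qed
   show ?thesis by (rule round_le[where \<psi>="\<lambda>a x1. 2 * \<delta> * Lc \<delta> * (\<Sum>j\<in>S. ind (x1 j = rare q j))" and qs=qs and n=n, OF va bnd])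
  qed
  finally show ?thesis .
qed


end



lemma Pmat_tr1: "Pmat n q0 tr1 a i = (if i = 1 then 1 else 0)"
  unfolding Pmat_def tr1_def by (simp add: bind_pmf_const pmf_return)

lemma pvalue_tr1:
  assumes "k \<ge> 1"
  shows "pvalue n k q0 tr1 qs rw \<pi> = exp_reward n qs rw 1 (\<pi> 1)"
proof -
  have "pvalue n k q0 tr1 qs rw \<pi> = (\<Sum>i\<in>{1..k}. if i = 1 then exp_reward n qs rw i (\<pi> i) else 0)"
    unfolding pvalue_def Pmat_tr1 by (intro sum.cong) auto
  also have "\<dots> = exp_reward n qs rw 1 (\<pi> 1)" using assms by simp
  finally show ?thesis .
qed

lemma exp_reward_bnd:
  assumes "\<And>x. 0 \<le> rw 1 x \<and> rw 1 x \<le> 1"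
  shows "0 \<le> exp_reward n qs rw 1 a \<and> exp_reward n qs rw 1 a \<le> 1"
  unfolding exp_reward_def using assms
  by (auto intro!: exp_le_const exp_ge_const)

lemma obs_policy: "(\<lambda>_. Obs) \<in> policies n k"
  unfolding policies_def interventions_def by auto

lemma const_policy: "a \<in> interventions n \<Longrightarrow> (\<lambda>_. a) \<in> policies n k"
  unfolding policies_def by auto

context
  fixes n k :: nat and q0 :: "nat \<Rightarrow> real" and qs :: "nat \<Rightarrow> nat \<Rightarrow> real" and rw :: "nat \<Rightarrow> (nat \<Rightarrow> bool) \<Rightarrow> real"
  assumes k1: "k \<ge> 1" and rwb: "\<And>x. 0 \<le> rw 1 x \<and> rw 1 x \<le> 1"
begin

lemma pv_bnd: "0 \<le> pvalue n k q0 tr1 qs rw \<pi> \<and> pvalue n k q0 tr1 qs rw \<pi> \<le> 1"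
  using exp_reward_bnd[where rw=rw and n=n and qs=qs, OF rwb] pvalue_tr1[OF k1] by simp

lemma opt_ge: "\<pi> \<in> policies n k \<Longrightarrow> pvalue n k q0 tr1 qs rw \<pi> \<le> opt_value n k q0 tr1 qs rw"
  unfolding opt_value_def using pv_bnd
  by (intro cSUP_upper) (auto intro!: bdd_aboveI[of _ 1])

lemma opt_le: "opt_value n k q0 tr1 qs rw \<le> 1"
  unfolding opt_value_def using pv_bnd obs_policy[of n k]
  by (intro cSUP_least) auto

lemma opt_ge0: "opt_value n k q0 tr1 qs rw \<ge> 0"
  using opt_ge[OF obs_policy[of n k]] pv_bnd[of "\<lambda>_. Obs"] by linarith

lemma subopt_bnd: "\<bar>subopt n k q0 tr1 qs rw \<pi>\<bar> \<le> 2"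
  unfolding subopt_def using pv_bnd[of \<pi>] opt_le opt_ge0 by linarith

lemma subopt_ge: "\<pi> \<in> policies n k \<Longrightarrow> \<pi>' \<in> policies n k \<Longrightarrow>
   subopt n k q0 tr1 qs rw \<pi> \<ge> exp_reward n qs rw 1 (\<pi>' 1) - exp_reward n qs rw 1 (\<pi> 1)"
  unfolding subopt_def using opt_ge[of \<pi>'] pvalue_tr1[OF k1] by simp

lemma subopt_ge0: "\<pi> \<in> policies n k \<Longrightarrow> subopt n k q0 tr1 qs rw \<pi> \<ge> 0"
  using subopt_ge[of \<pi> \<pi>] by simp

lemma regret_eq:
  "simple_regret n k q0 tr1 qs rw A T = measure_pmf.expectation (history n q0 tr1 qs rw A T)
      (\<lambda>h. measure_pmf.expectation (alg_out A h) (subopt n k q0 tr1 qs rw))"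
  unfolding simple_regret_def by (rule integral_bind_pmf_bdd[OF subopt_bnd])

end

lemma exp_policy_mono:
  fixes f g :: "(nat \<Rightarrow> interv) \<Rightarrow> real"
  assumes "set_pmf M \<subseteq> P" "\<And>\<pi>. \<pi> \<in> P \<Longrightarrow> f \<pi> \<le> g \<pi>" "\<And>\<pi>. \<bar>f \<pi>\<bar> \<le> B" "\<And>\<pi>. \<bar>g \<pi>\<bar> \<le> B"
  shows "measure_pmf.expectation M f \<le> measure_pmf.expectation M g"
  using assms
  by (intro integral_mono_AE measure_pmf.integrable_const_bound[where B=B])
     (auto simp: AE_measure_pmf_iff)



lemma sum_sum_list: "(\<Sum>j\<in>S. sum_list (map (f j) h)) = sum_list (map (\<lambda>ob. \<Sum>j\<in>S. f j ob) h)"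
  by (induction h) (auto simp: sum.distrib)

lemma exp01:
  fixes f :: "'a \<Rightarrow> real"
  assumes "\<And>x. 0 \<le> f x \<and> f x \<le> 1"
  shows "0 \<le> measure_pmf.expectation M f \<and> measure_pmf.expectation M f \<le> 1"
proof
  show "0 \<le> measure_pmf.expectation M f" using assms by (intro Bochner_Integration.integral_nonneg) auto
  show "measure_pmf.expectation M f \<le> 1"
    using assms by (intro measure_pmf.integral_le_const measure_pmf.integrable_const_bound[where B=1]) auto
qed

context inst
begin

definition gj :: "algo \<Rightarrow> nat \<Rightarrow> obs list \<Rightarrow> real" where
  "gj A j h = measure_pmf.expectation (alg_out A h) (\<lambda>\<pi>. ind (\<pi> 1 = Do j (rare q j)))"

lemma gj_bnd: "0 \<le> gj A j h \<and> gj A j h \<le> 1"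
  unfolding gj_def by (rule exp01) (auto simp: ind_def)

lemma main_sum:
  assumes va: "valid_algo n k A" and k1: "k \<ge> 1" and qs1: "qs 1 = q"
  shows "simple_regret n k q0 tr1 qs (rw0 q S \<delta>) A T + (\<Sum>j\<in>S. simple_regret n k q0 tr1 qs (rwj q S \<delta> j) A T)
     \<ge> (\<delta>/4) * (card S - 3 * \<delta> * Lc \<delta> * T)"
proof -
  define H0 where "H0 = history n q0 tr1 qs (rw0 q S \<delta>) A T"
  define Hj where "Hj j = history n q0 tr1 qs (rwj q S \<delta> j) A T" for j
  have finH0: "finite (set_pmf H0)" unfolding H0_def using va by simp
  have finHj: "finite (set_pmf (Hj j))" for j unfolding Hj_def using va by simp
  have outP: "set_pmf (alg_out A h) \<subseteq> policies n k" for h using va unfolding valid_algo_def by auto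
  have pol1: "\<pi> 1 \<in> interventions n" if "\<pi> \<in> policies n k" for \<pi> using that k1 unfolding policies_def by auto
  have FjI: "Do j (rare q j) \<in> interventions n" if "j \<in> S" for j using that S unfolding interventions_def by auto
  have er: "exp_reward n qs rw 1 a = measure_pmf.expectation (Xdist n q a) (rw 1)" for rw a
    unfolding exp_reward_def qs1 ..
  have step1: "simple_regret n k q0 tr1 qs (rw0 q S \<delta>) A T \<ge> (\<delta>/2) * (\<Sum>j\<in>S. measure_pmf.expectation H0 (gj A j))"
  proof -
    have pt: "subopt n k q0 tr1 qs (rw0 q S \<delta>) \<pi> \<ge> (\<delta>/2) * (\<Sum>j\<in>S. ind (\<pi> 1 = Do j (rare q j)))"
      if \<pi>: "\<pi> \<in> policies n k" for \<pi>
    proof (cases "\<exists>j\<in>S. \<pi> 1 = Do j (rare q j)")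
      case True
      then obtain j where j: "j \<in> S" "\<pi> 1 = Do j (rare q j)" by blast
      have "\<delta>/2 \<le> exp_reward n qs (rw0 q S \<delta>) 1 ((\<lambda>_. Obs) 1) - exp_reward n qs (rw0 q S \<delta>) 1 (\<pi> 1)"
        unfolding er using j mu0_F[OF j(1)] mu0_Obs by simp
      also have "\<dots> \<le> subopt n k q0 tr1 qs (rw0 q S \<delta>) \<pi>"
        by (rule subopt_ge[OF k1 rw0_bnd \<pi> obs_policy])
      finally have "subopt n k q0 tr1 qs (rw0 q S \<delta>) \<pi> \<ge> \<delta>/2" .
      moreover have "(\<delta>/2) * (\<Sum>j\<in>S. ind (\<pi> 1 = Do j (rare q j))) \<le> (\<delta>/2) * 1"
        using sum_ind_Do_le[OF finS, of "\<pi> 1" "rare q"] dpos by (intro mult_left_mono) auto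
      ultimately show ?thesis by linarith
    next
      case False
      then have "(\<Sum>j\<in>S. ind (\<pi> 1 = Do j (rare q j))) = 0" by (simp add: ind_def)
      then show ?thesis using subopt_ge0[OF k1 rw0_bnd \<pi>] by simp
    qed
    have inner: "measure_pmf.expectation (alg_out A h) (subopt n k q0 tr1 qs (rw0 q S \<delta>))
        \<ge> (\<delta>/2) * (\<Sum>j\<in>S. gj A j h)" for h
    proof -
      have "measure_pmf.expectation (alg_out A h) (\<lambda>\<pi>. (\<delta>/2) * (\<Sum>j\<in>S. ind (\<pi> 1 = Do j (rare q j))))
          \<le> measure_pmf.expectation (alg_out A h) (subopt n k q0 tr1 qs (rw0 q S \<delta>))"
      proof (rule exp_policy_mono[OF outP pt, where B=2])
        fix \<pi> :: "nat \<Rightarrow> interv"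
        have "(\<Sum>j\<in>S. ind (\<pi> 1 = Do j (rare q j))) \<le> 1" by (rule sum_ind_Do_le[OF finS])
        moreover have "(\<Sum>j\<in>S. ind (\<pi> 1 = Do j (rare q j))) \<ge> 0" by (intro sum_nonneg) (simp add: ind_def)
        ultimately have "(\<delta>/2) * (\<Sum>j\<in>S. ind (\<pi> 1 = Do j (rare q j))) \<le> (\<delta>/2) * 1"
          "(\<delta>/2) * (\<Sum>j\<in>S. ind (\<pi> 1 = Do j (rare q j))) \<ge> 0"
          using dpos by (auto intro: mult_left_mono)
        then show "\<bar>(\<delta>/2) * (\<Sum>j\<in>S. ind (\<pi> 1 = Do j (rare q j)))\<bar> \<le> 2"
          using dsmall by linarith
        show "\<bar>subopt n k q0 tr1 qs (rw0 q S \<delta>) \<pi>\<bar> \<le> 2" by (rule subopt_bnd[OF k1 rw0_bnd])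
      qed auto
      also have "measure_pmf.expectation (alg_out A h) (\<lambda>\<pi>. (\<delta>/2) * (\<Sum>j\<in>S. ind (\<pi> 1 = Do j (rare q j))))
          = (\<delta>/2) * (\<Sum>j\<in>S. gj A j h)"
        unfolding gj_def
        by (simp add: Bochner_Integration.integral_sum measure_pmf.integrable_const_bound[where B=1] ind_def)
      finally show ?thesis by simp
    qed
    have "simple_regret n k q0 tr1 qs (rw0 q S \<delta>) A T = measure_pmf.expectation H0
        (\<lambda>h. measure_pmf.expectation (alg_out A h) (subopt n k q0 tr1 qs (rw0 q S \<delta>)))"
      unfolding H0_def by (rule regret_eq[OF k1 rw0_bnd])
    moreover have "measure_pmf.expectation H0 (\<lambda>h. (\<delta>/2) * (\<Sum>j\<in>S. gj A j h)) \<le> measure_pmf.expectation H0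
        (\<lambda>h. measure_pmf.expectation (alg_out A h) (subopt n k q0 tr1 qs (rw0 q S \<delta>)))"
      using inner by (intro integral_mono integrable_measure_pmf_finite finH0) auto
    moreover have "measure_pmf.expectation H0 (\<lambda>h. (\<delta>/2) * (\<Sum>j\<in>S. gj A j h))
        = (\<delta>/2) * (\<Sum>j\<in>S. measure_pmf.expectation H0 (gj A j))"
      by (simp add: Bochner_Integration.integral_sum integrable_measure_pmf_finite[OF finH0])
    ultimately show ?thesis by linarith
  qed
  have step2: "simple_regret n k q0 tr1 qs (rwj q S \<delta> j) A T \<ge> (\<delta>/2) * measure_pmf.expectation (Hj j) (\<lambda>h. 1 - gj A j h)"
    if j: "j \<in> S" for j
  proof -
    have pt: "subopt n k q0 tr1 qs (rwj q S \<delta> j) \<pi> \<ge> (\<delta>/2) * (1 - ind (\<pi> 1 = Do j (rare q j)))"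
      if \<pi>: "\<pi> \<in> policies n k" for \<pi>
    proof (cases "\<pi> 1 = Do j (rare q j)")
      case True
      then show ?thesis using subopt_ge0[OF k1 rwj_bnd \<pi>] by (simp add: ind_def)
    next
      case False
      have "\<delta>/2 \<le> exp_reward n qs (rwj q S \<delta> j) 1 ((\<lambda>_. Do j (rare q j)) 1) - exp_reward n qs (rwj q S \<delta> j) 1 (\<pi> 1)"
        unfolding er using muj_F[OF j] muj_other[OF j False] by simp
      also have "\<dots> \<le> subopt n k q0 tr1 qs (rwj q S \<delta> j) \<pi>"
        by (rule subopt_ge[OF k1 rwj_bnd \<pi> const_policy[OF FjI[OF j]]])
      finally show ?thesis using False by (simp add: ind_def)
    qed
    have inner: "measure_pmf.expectation (alg_out A h) (subopt n k q0 tr1 qs (rwj q S \<delta> j))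
        \<ge> (\<delta>/2) * (1 - gj A j h)" for h
    proof -
      have "measure_pmf.expectation (alg_out A h) (\<lambda>\<pi>. (\<delta>/2) * (1 - ind (\<pi> 1 = Do j (rare q j))))
          \<le> measure_pmf.expectation (alg_out A h) (subopt n k q0 tr1 qs (rwj q S \<delta> j))"
      proof (rule exp_policy_mono[OF outP pt, where B=2])
        fix \<pi> :: "nat \<Rightarrow> interv"
        show "\<bar>(\<delta>/2) * (1 - ind (\<pi> 1 = Do j (rare q j)))\<bar> \<le> 2"
          using dpos dsmall by (simp add: ind_def)
        show "\<bar>subopt n k q0 tr1 qs (rwj q S \<delta> j) \<pi>\<bar> \<le> 2" by (rule subopt_bnd[OF k1 rwj_bnd])
      qed auto
      also have "measure_pmf.expectation (alg_out A h) (\<lambda>\<pi>. (\<delta>/2) * (1 - ind (\<pi> 1 = Do j (rare q j))))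
          = (\<delta>/2) * (1 - gj A j h)"
        unfolding gj_def
        by (simp add: Bochner_Integration.integral_diff measure_pmf.integrable_const_bound[where B=1] ind_def)
      finally show ?thesis by simp
    qed
    have "simple_regret n k q0 tr1 qs (rwj q S \<delta> j) A T = measure_pmf.expectation (Hj j)
        (\<lambda>h. measure_pmf.expectation (alg_out A h) (subopt n k q0 tr1 qs (rwj q S \<delta> j)))"
      unfolding Hj_def by (rule regret_eq[OF k1 rwj_bnd])
    moreover have "measure_pmf.expectation (Hj j) (\<lambda>h. (\<delta>/2) * (1 - gj A j h)) \<le> measure_pmf.expectation (Hj j)
        (\<lambda>h. measure_pmf.expectation (alg_out A h) (subopt n k q0 tr1 qs (rwj q S \<delta> j)))"
      using inner by (intro integral_mono integrable_measure_pmf_finite finHj) auto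
    moreover have "measure_pmf.expectation (Hj j) (\<lambda>h. (\<delta>/2) * (1 - gj A j h))
        = (\<delta>/2) * measure_pmf.expectation (Hj j) (\<lambda>h. 1 - gj A j h)"
      by simp
    ultimately show ?thesis by linarith
  qed
  have step3: "measure_pmf.expectation H0 (gj A j) + measure_pmf.expectation (Hj j) (\<lambda>h. 1 - gj A j h)
      \<ge> (1 + measure_pmf.expectation H0 (Lsum (Fj q \<delta> j))) / 2" if j: "j \<in> S" for j
  proof -
    have hc: "measure_pmf.expectation (Hj j) G = measure_pmf.expectation H0 (\<lambda>h. G h * exp (Lsum (Fj q \<delta> j) h))" for G
      unfolding Hj_def H0_def
      by (rule hist_change[where rw="rw0 q S \<delta>" and rw'="rwj q S \<delta> j" and F="Fj q \<delta> j" and qs=qs, OF va rw0_bnd rwj_bnd change1[OF j] change2[OF j]])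
    have e1: "measure_pmf.expectation H0 (\<lambda>h. exp (Lsum (Fj q \<delta> j) h)) = 1"
      using hc[of "\<lambda>_. 1"] by simp
    have "measure_pmf.expectation (Hj j) (\<lambda>h. 1 - gj A j h) = measure_pmf.expectation H0 (\<lambda>h. (1 - gj A j h) * exp (Lsum (Fj q \<delta> j) h))"
      by (rule hc)
    then show ?thesis using bh[OF finH0 gj_bnd e1] by simp
  qed
  have step4: "(\<Sum>j\<in>S. measure_pmf.expectation H0 (Lsum (Fj q \<delta> j))) \<ge> - (3 * \<delta> * Lc \<delta> * T)"
  proof -
    have "(\<Sum>j\<in>S. measure_pmf.expectation H0 (Lsum (Fj q \<delta> j)))
        = measure_pmf.expectation H0 (\<lambda>h. \<Sum>j\<in>S. Lsum (Fj q \<delta> j) h)"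
      by (simp add: Bochner_Integration.integral_sum integrable_measure_pmf_finite[OF finH0])
    also have "\<dots> = - measure_pmf.expectation H0 (\<lambda>h. sum_list (map (\<lambda>(a0,x0,i,a1,x1,r). \<Sum>j\<in>S. - Fj q \<delta> j x1 r) h))"
    proof -
      have "(\<Sum>j\<in>S. Lsum (Fj q \<delta> j) h) = - sum_list (map (\<lambda>(a0,x0,i,a1,x1,r). \<Sum>j\<in>S. - Fj q \<delta> j x1 r) h)" for h
        unfolding Lsum_def sum_sum_list
        by (induction h) (auto simp: sum_negf)
      then show ?thesis by simp
    qed
    finally have eq: "(\<Sum>j\<in>S. measure_pmf.expectation H0 (Lsum (Fj q \<delta> j)))
       = - measure_pmf.expectation H0 (\<lambda>h. sum_list (map (\<lambda>(a0,x0,i,a1,x1,r). \<Sum>j\<in>S. - Fj q \<delta> j x1 r) h))" .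
    have "measure_pmf.expectation H0 (\<lambda>h. sum_list (map (\<lambda>(a0,x0,i,a1,x1,r). \<Sum>j\<in>S. - Fj q \<delta> j x1 r) h))
        \<le> 3 * \<delta> * Lc \<delta> * T"
      unfolding H0_def by (rule hist_sum_le[OF va round_K[where qs=qs, OF va qs1]])
    then show ?thesis unfolding eq by simp
  qed
  have "(\<delta>/4) * (card S - 3 * \<delta> * Lc \<delta> * T) \<le> (\<delta>/4) * (card S + (\<Sum>j\<in>S. measure_pmf.expectation H0 (Lsum (Fj q \<delta> j))))"
    using step4 dpos by (intro mult_left_mono) auto
  also have "\<dots> = (\<delta>/2) * (\<Sum>j\<in>S. (1 + measure_pmf.expectation H0 (Lsum (Fj q \<delta> j))) / 2)"
    by (simp add: sum.distrib sum_divide_distrib[symmetric])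
  also have "\<dots> \<le> (\<delta>/2) * (\<Sum>j\<in>S. measure_pmf.expectation H0 (gj A j) + measure_pmf.expectation (Hj j) (\<lambda>h. 1 - gj A j h))"
    using step3 dpos by (intro mult_left_mono sum_mono) auto
  also have "\<dots> = (\<delta>/2) * (\<Sum>j\<in>S. measure_pmf.expectation H0 (gj A j)) + (\<Sum>j\<in>S. (\<delta>/2) * measure_pmf.expectation (Hj j) (\<lambda>h. 1 - gj A j h))"
    by (simp add: sum.distrib sum_distrib_left distrib_left)
  also have "\<dots> \<le> simple_regret n k q0 tr1 qs (rw0 q S \<delta>) A T + (\<Sum>j\<in>S. simple_regret n k q0 tr1 qs (rwj q S \<delta> j) A T)"
    using step1 step2 by (intro add_mono sum_mono) auto
  finally show ?thesis by simp
qed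

end



lemma mpar_props:
  assumes n1: "n \<ge> 1"
  shows "1 \<le> mpar n q \<and> mpar n q \<le> n \<and> card {j\<in>{1..n}. rho q j < 1 / real (mpar n q)} \<ge> mpar n q"
proof -
  define xs where "xs = map (\<lambda>j. min (q j) (1 - q j)) [1..<n+1]"
  define s where "s = sort xs"
  define M where "M = {j \<in> {1..n}. s ! (j - 1) < 1 / real j}"
  have mp_eq: "mpar n q = Max M" unfolding mpar_def M_def s_def xs_def Let_def ..
  have len: "length s = n" unfolding s_def xs_def by simp
  have le_half: "x \<le> 1/2" if "x \<in> set s" for x
    using that unfolding s_def xs_def by (auto simp: min_def)
  have "1 \<in> M" unfolding M_def using n1 le_half[of "s ! 0"] len
    by (auto intro!: nth_mem)
  moreover have finM: "finite M" unfolding M_def by simp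
  ultimately have mM: "Max M \<in> M" and m1: "Max M \<ge> 1" by (auto intro: Max_ge Max_in)
  define m where "m = Max M"
  have mn: "1 \<le> m" "m \<le> n" and sm: "s ! (m - 1) < 1 / real m" using mM unfolding m_def M_def by auto
  define P where "P = (\<lambda>x::real. x < 1 / real m)"
  have sorted: "sorted s" unfolding s_def by simp
  have allP: "\<forall>x\<in>set (take m s). P x"
  proof
    fix x assume "x \<in> set (take m s)"
    then obtain i where i: "i < length (take m s)" "x = take m s ! i" by (auto simp: in_set_conv_nth)
    have im: "i < m" "i < n" using i len mn by auto
    have "x = s ! i" using i im by simp
    also have "\<dots> \<le> s ! (m - 1)" using sorted im len mn by (intro sorted_nth_mono) auto
    finally show "P x" using sm unfolding P_def by simp
  qed
  have "m = length (filter P (take m s))"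
    using allP len mn by (simp add: filter_True[OF allP] min_def)
  also have "\<dots> \<le> length (filter P s)"
  proof -
    have "filter P s = filter P (take m s) @ filter P (drop m s)"
      by (metis append_take_drop_id filter_append)
    then show ?thesis by simp
  qed
  also have "length (filter P s) = length (filter P xs)"
  proof -
    have "mset (filter P s) = mset (filter P xs)" unfolding s_def by simp
    then show ?thesis by (metis size_mset)
  qed
  also have "\<dots> = length (filter (\<lambda>j. P (rho q j)) [1..<n+1])"
    unfolding xs_def rho_def by (simp add: filter_map o_def)
  also have "\<dots> = card {j\<in>{1..n}. rho q j < 1 / real m}"
  proof -
    have eq: "{x. P (rho q x)} \<inter> set [1..<n+1] = {j\<in>{1..n}. rho q j < 1 / real m}" by (auto simp: P_def)
    have d: "length (filter (\<lambda>j. P (rho q j)) [1..<n+1]) = card ({x. P (rho q x)} \<inter> set [1..<n+1])"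
      by (rule distinct_length_filter) simp
    then show ?thesis unfolding eq .
  qed
  finally have "m \<le> card {j\<in>{1..n}. rho q j < 1 / real m}" .
  moreover have "mpar n q = m" unfolding mp_eq m_def ..
  ultimately show ?thesis using mn by simp
qed

lemma select_S:
  assumes m1: "m \<ge> 1" and mn: "m \<le> n" and cardJ: "card {j\<in>{1..n}. rho q j < 1 / real m} \<ge> m"
  obtains S where "S \<subseteq> {1..n}" "card S = max 1 (m div 2)" "(\<Sum>j\<in>S. rho q j) \<le> 1/2"
proof -
  define J where "J = {j\<in>{1..n}. rho q j < 1 / real m}"
  define s where "s = max 1 (m div 2)"
  have "s \<le> m" unfolding s_def using m1 by auto
  then have "s \<le> card J" using cardJ unfolding J_def by simp
  then obtain S where S: "S \<subseteq> J" "card S = s" "finite S" by (rule obtain_subset_with_card_n)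
  have "(\<Sum>j\<in>S. rho q j) \<le> 1/2"
  proof (cases "m = 1")
    case True
    then have "card S = 1" using S unfolding s_def by simp
    then obtain j where "S = {j}" by (auto simp: card_Suc_eq)
    then show ?thesis using rho_le[of q j] by simp
  next
    case False
    then have m2: "m \<ge> 2" using m1 by simp
    have "(\<Sum>j\<in>S. rho q j) \<le> real (card S) * (1 / real m)"
      using S unfolding J_def by (intro sum_bounded_above) auto
    also have "\<dots> = real (m div 2) / real m" using S m2 unfolding s_def by simp
    also have "\<dots> \<le> 1/2"
    proof -
      have "real (m div 2) * 2 \<le> real m" by (metis of_nat_le_iff of_nat_mult of_nat_numeral div_times_less_eq_dividend)
      then show ?thesis using m2 by (simp add: field_simps)
    qed
    finally show ?thesis .
  qed
  moreover have "S \<subseteq> {1..n}" using S unfolding J_def by auto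
  ultimately show ?thesis using that S unfolding s_def by blast
qed

lemma lambda_le:
  assumes k1: "k \<ge> 1"
  shows "lambda_par n k q0 tr1 qs \<le> real (mpar n (qs 1))"
proof -
  define c where "c = card (interventions n)"
  have obsI: "Obs \<in> interventions n" unfolding interventions_def by simp
  have c0: "c > 0" unfolding c_def using fin_interv[of n] obsI by (auto simp: card_gt_0_iff)
  define f0 where "f0 = (\<lambda>a::interv. 1 / real c)"
  have sumf: "(\<Sum>b\<in>interventions n. f0 b) = 1" unfolding f0_def using c0 obsI unfolding c_def by auto
  have f0pos: "f0 a > 0" for a using c0 by (simp add: f0_def)
  have f0F: "f0 \<in> freqs n" unfolding freqs_def using sumf f0pos by blast
  have trm: "Pmat n q0 tr1 a i * sqrt (real (mpar n (qs i)))
                     * (\<Sum>b\<in>interventions n. Pmat n q0 tr1 b i * f0 b) powr (-1/2)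
             = (if i = 1 then sqrt (real (mpar n (qs 1))) else 0)" for a i
  proof (cases "i = 1")
    case True
    have "(\<Sum>b\<in>interventions n. Pmat n q0 tr1 b i * f0 b) = 1" unfolding Pmat_tr1 using True sumf by simp
    then show ?thesis unfolding Pmat_tr1 using True by simp
  next
    case False
    then show ?thesis unfolding Pmat_tr1 by simp
  qed
  have inner: "\<bar>\<Sum>i\<in>{1..k}. Pmat n q0 tr1 a i * sqrt (real (mpar n (qs i)))
                     * (\<Sum>b\<in>interventions n. Pmat n q0 tr1 b i * f0 b) powr (-1/2)\<bar> = sqrt (real (mpar n (qs 1)))" for a
  proof -
    have "(\<Sum>i\<in>{1..k}. Pmat n q0 tr1 a i * sqrt (real (mpar n (qs i)))
                     * (\<Sum>b\<in>interventions n. Pmat n q0 tr1 b i * f0 b) powr (-1/2))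
        = (\<Sum>i\<in>{1..k}. if i = 1 then sqrt (real (mpar n (qs 1))) else 0)"
      by (simp only: trm)
    also have "\<dots> = sqrt (real (mpar n (qs 1)))" using k1 by simp
    finally show ?thesis by simp
  qed
  have ne: "interventions n \<noteq> {}" using obsI by auto
  have val: "(Max ((\<lambda>a. \<bar>\<Sum>i\<in>{1..k}. Pmat n q0 tr1 a i * sqrt (real (mpar n (qs i)))
                     * (\<Sum>b\<in>interventions n. Pmat n q0 tr1 b i * f0 b) powr (-1/2)\<bar>) ` interventions n)) ^ 2
        = real (mpar n (qs 1))"
  proof -
    have "(\<lambda>a. \<bar>\<Sum>i\<in>{1..k}. Pmat n q0 tr1 a i * sqrt (real (mpar n (qs i)))
                     * (\<Sum>b\<in>interventions n. Pmat n q0 tr1 b i * f0 b) powr (-1/2)\<bar>) ` interventions n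
       = {sqrt (real (mpar n (qs 1)))}"
      unfolding inner using ne by auto
    then show ?thesis by simp
  qed
  have bdd: "bdd_below ((\<lambda>f. (Max ((\<lambda>a. \<bar>\<Sum>i\<in>{1..k}. Pmat n q0 tr1 a i * sqrt (real (mpar n (qs i)))
                     * (\<Sum>b\<in>interventions n. Pmat n q0 tr1 b i * f b) powr (-1/2)\<bar>) ` interventions n)) ^ 2) ` freqs n)"
    by (rule bdd_belowI[of _ 0]) auto
  show ?thesis unfolding lambda_par_def
    using cINF_lower[OF bdd f0F] val by simp
qed




theorem theorem2:
  "\<exists>c::real. c > 0 \<and>
    (\<forall>n k::nat. n \<ge> 1 \<longrightarrow> k \<ge> 1 \<longrightarrow>
      (\<exists>(tr :: (nat \<Rightarrow> bool) \<Rightarrow> nat pmf) (q0 :: nat \<Rightarrow> real).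
         (\<forall>x. set_pmf (tr x) \<subseteq> {1..k}) \<and> (\<forall>j\<in>{1..n}. 0 \<le> q0 j \<and> q0 j \<le> 1) \<and>
         (\<forall>qs :: nat \<Rightarrow> nat \<Rightarrow> real.
            (\<forall>i\<in>{1..k}. \<forall>j\<in>{1..n}. 0 \<le> qs i j \<and> qs i j \<le> 1) \<longrightarrow>
            (\<exists>T0::nat. \<forall>T\<ge>T0. \<forall>A. valid_algo n k A \<longrightarrow>
               (\<exists>rw :: nat \<Rightarrow> (nat \<Rightarrow> bool) \<Rightarrow> real.
                  (\<forall>i x. 0 \<le> rw i x \<and> rw i x \<le> 1) \<and>
                  simple_regret n k q0 tr qs rw A T
                    \<ge> c * sqrt (lambda_par n k q0 tr qs / real T))))))"
proof (intro exI[of _ "1/192::real"] conjI allI impI)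
  show "(0::real) < 1/192" by simp
  fix n k :: nat assume n1: "n \<ge> 1" and k1: "k \<ge> 1"
  let ?q0 = "\<lambda>_::nat. 0::real"
  show "\<exists>(tr :: (nat \<Rightarrow> bool) \<Rightarrow> nat pmf) (q0 :: nat \<Rightarrow> real).
         (\<forall>x. set_pmf (tr x) \<subseteq> {1..k}) \<and> (\<forall>j\<in>{1..n}. 0 \<le> q0 j \<and> q0 j \<le> 1) \<and>
         (\<forall>qs :: nat \<Rightarrow> nat \<Rightarrow> real.
            (\<forall>i\<in>{1..k}. \<forall>j\<in>{1..n}. 0 \<le> qs i j \<and> qs i j \<le> 1) \<longrightarrow>
            (\<exists>T0::nat. \<forall>T\<ge>T0. \<forall>A. valid_algo n k A \<longrightarrow>
               (\<exists>rw :: nat \<Rightarrow> (nat \<Rightarrow> bool) \<Rightarrow> real.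
                  (\<forall>i x. 0 \<le> rw i x \<and> rw i x \<le> 1) \<and>
                  simple_regret n k q0 tr qs rw A T
                    \<ge> 1/192 * sqrt (lambda_par n k q0 tr qs / real T))))"
  proof (intro exI[of _ tr1] exI[of _ ?q0] conjI allI impI ballI)
    show "set_pmf (tr1 x) \<subseteq> {1..k}" for x using k1 by (simp add: tr1_def)
    show "0 \<le> ?q0 j" "?q0 j \<le> 1" for j by simp_all
    fix qs :: "nat \<Rightarrow> nat \<Rightarrow> real"
    assume qsb: "\<forall>i\<in>{1..k}. \<forall>j\<in>{1..n}. 0 \<le> qs i j \<and> qs i j \<le> 1"
    define q where "q = qs 1"
    have qb: "0 \<le> q j \<and> q j \<le> 1" if "j \<in> {1..n}" for j using qsb k1 that unfolding q_def by auto
    define m where "m = mpar n q"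
    have mp: "1 \<le> m" "m \<le> n" "card {j\<in>{1..n}. rho q j < 1 / real m} \<ge> m"
      using mpar_props[OF n1, of q] unfolding m_def by auto
    obtain S where S: "S \<subseteq> {1..n}" "card S = max 1 (m div 2)" "(\<Sum>j\<in>S. rho q j) \<le> 1/2"
      using select_S[OF mp] by blast
    define s where "s = card S"
    have s1: "s \<ge> 1" using S(2) unfolding s_def by simp
    have sn: "s \<le> n" unfolding s_def using S(1) by (metis card_atLeastAtMost card_mono diff_Suc_1 finite_atLeastAtMost)
    have s3: "real m \<le> 3 * real s"
    proof -
      have "m \<le> 3 * s" using S(2) mp(1) unfolding s_def by (cases "m = 1") auto
      then show ?thesis by linarith
    qed
    show "\<exists>T0::nat. \<forall>T\<ge>T0. \<forall>A. valid_algo n k A \<longrightarrow>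
               (\<exists>rw :: nat \<Rightarrow> (nat \<Rightarrow> bool) \<Rightarrow> real.
                  (\<forall>i x. 0 \<le> rw i x \<and> rw i x \<le> 1) \<and>
                  simple_regret n k ?q0 tr1 qs rw A T
                    \<ge> 1/192 * sqrt (lambda_par n k ?q0 tr1 qs / real T))"
    proof (intro exI[of _ n] allI impI)
      fix T :: nat and A assume T: "n \<le> T" and va: "valid_algo n k A"
      have T1: "real T \<ge> 1" using T n1 by simp
      have sT: "real s \<le> real T" using sn T by simp
      define \<delta> where "\<delta> = sqrt (real s / (48 * real T))"
      have d2: "\<delta>^2 = real s / (48 * real T)" unfolding \<delta>_def using T1 by simp
      have dpos: "\<delta> > 0" unfolding \<delta>_def using s1 T1 by simp
      have dsmall: "\<delta> \<le> 1/4"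
      proof -
        have "\<delta>^2 \<le> (1/4)^2" unfolding d2 using sT T1 by (simp add: field_simps)
        then show ?thesis by (rule power2_le_imp_le) simp
      qed
      interpret inst n q S \<delta>
        using dpos dsmall S qb by unfold_locales auto
      have ms: "simple_regret n k ?q0 tr1 qs (rw0 q S \<delta>) A T + (\<Sum>j\<in>S. simple_regret n k ?q0 tr1 qs (rwj q S \<delta> j) A T)
         \<ge> (\<delta>/4) * (card S - 3 * \<delta> * Lc \<delta> * T)"
        by (rule main_sum[OF va k1]) (simp add: q_def)
      have "3 * \<delta> * Lc \<delta> * T \<le> 3 * \<delta> * (8 * \<delta>) * T"
        using Lc_le dpos T1 by (intro mult_right_mono mult_left_mono) auto
      also have "\<dots> = 24 * \<delta>^2 * T" by (simp add: power2_eq_square)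
      also have "\<dots> = real s / 2" unfolding d2 using T1 by simp
      finally have "(\<delta>/4) * (card S - 3 * \<delta> * Lc \<delta> * T) \<ge> (\<delta>/4) * (s - s / 2)"
        using dpos unfolding s_def by (intro mult_left_mono) auto
      with ms have sum_ge: "simple_regret n k ?q0 tr1 qs (rw0 q S \<delta>) A T + (\<Sum>j\<in>S. simple_regret n k ?q0 tr1 qs (rwj q S \<delta> j) A T)
         \<ge> \<delta> * s / 8" by simp
      define R where "R = 1/192 * sqrt (lambda_par n k ?q0 tr1 qs / real T)"
      have R_le: "R \<le> \<delta> / 16"
      proof -
        have "lambda_par n k ?q0 tr1 qs / real T \<le> 3 * real s / real T"
          using lambda_le[OF k1, of n ?q0 qs] s3 T1 unfolding m_def q_def
          by (intro divide_right_mono) auto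
        hence "sqrt (lambda_par n k ?q0 tr1 qs / real T) \<le> sqrt (3 * real s / real T)"
          by (rule real_sqrt_le_mono)
        also have "sqrt (3 * real s / real T) = 12 * \<delta>"
        proof (rule real_sqrt_unique)
          show "(12 * \<delta>)^2 = 3 * real s / real T" using d2 T1 by (simp add: power_mult_distrib field_simps)
          show "0 \<le> 12 * \<delta>" using dpos by simp
        qed
        finally show ?thesis unfolding R_def by simp
      qed
      show "\<exists>rw :: nat \<Rightarrow> (nat \<Rightarrow> bool) \<Rightarrow> real.
                  (\<forall>i x. 0 \<le> rw i x \<and> rw i x \<le> 1) \<and>
                  simple_regret n k ?q0 tr1 qs rw A T
                    \<ge> 1/192 * sqrt (lambda_par n k ?q0 tr1 qs / real T)"
      proof (rule ccontr)
        assume neg: "\<not> ?thesis"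
        have lt: "simple_regret n k ?q0 tr1 qs rw A T < R" if "\<forall>i x. 0 \<le> rw i x \<and> rw i x \<le> 1" for rw
        proof -
          have "\<not> (1/192 * sqrt (lambda_par n k ?q0 tr1 qs / real T) \<le> simple_regret n k ?q0 tr1 qs rw A T)"
            using neg that by blast
          then show ?thesis unfolding R_def by simp
        qed
        have r0: "simple_regret n k ?q0 tr1 qs (rw0 q S \<delta>) A T < R" by (rule lt) (use rw0_bnd in auto)
        have rj: "(\<Sum>j\<in>S. simple_regret n k ?q0 tr1 qs (rwj q S \<delta> j) A T) \<le> real (card S) * R"
        proof (rule sum_bounded_above)
          fix j assume "j \<in> S"
          have "simple_regret n k ?q0 tr1 qs (rwj q S \<delta> j) A T < R" by (rule lt) (use rwj_bnd in auto)
          then show "simple_regret n k ?q0 tr1 qs (rwj q S \<delta> j) A T \<le> R" by simp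
        qed
        have "\<delta> * s / 8 < R + real s * R" using sum_ge r0 rj unfolding s_def by linarith
        also have "\<dots> \<le> 2 * real s * (\<delta> / 16)"
        proof (cases "R \<le> 0")
          case True
          have "(1 + real s) * R \<le> 0" using True by (intro mult_nonneg_nonpos) auto
          moreover have "0 \<le> 2 * real s * (\<delta> / 16)" using dpos by simp
          ultimately show ?thesis by (simp add: algebra_simps)
        next
          case False
          have "1 * R \<le> real s * R" using s1 False by (intro mult_right_mono) auto
          moreover have "real s * R \<le> real s * (\<delta> / 16)" using R_le by (intro mult_left_mono) auto
          ultimately show ?thesis by linarith
        qed
        finally show False by simp
      qed
    qed
  qed
qed


end
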